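(* Let $\phi$ be a posterior family for a model $\pi$ with data space $Y$ and parameter space $\Theta$, and let $f$ be a test quantity. For every $M\in\mathbb{N}$: (1) for any $y\in Y$, if $q_{\phi,f}(x\mid y)=x$ for all $x\in[0,1]$, then $Q_{\phi,f}(i\mid y)=\frac{i+1}{M+1}$ for all $i\in\{0,\dots,M-1\}$; (2) if $\phi$ passes continuous SBC with respect to $f$, then $\phi$ passes $M$-sample SBC with respect to $f$.
   Context: Model $\pi$: prior density $\pi_{\text{prior}}(\theta)$ on $\Theta$, observation density $\pi_{\text{obs}}(y\mid\theta)$ on $Y$, $\pi_{\text{marg}}(y)=\int_\Theta\pi_{\text{obs}}(y\mid\theta)\pi_{\text{prior}}(\theta)\,\mathrm{d}\theta$, $\pi_{\text{post}}(\theta\mid y)=\pi_{\text{obs}}(y\mid\theta)\pi_{\text{prior}}(\theta)/\pi_{\text{marg}}(y)$. A posterior family is $\phi:\Theta\times Y\to\mathbb{R}^+$ with $\int_\Theta\phi(\theta\mid y)\,\mathrm{d}\theta=1$ for all $y$; a test quantity is a measurable $f:\Theta\times Y\to\mathbb{R}$. Sample quantities: for $M\in\mathbb{N}$, $\theta_1,\dots,\theta_M$ i.i.d. from $\phi(\cdot\mid y)$, $N^{\mathtt{less}}=\sum_m\mathbb{I}[f(\theta_m,y)<f(\tilde\theta,y)]$, $N^{\mathtt{equals}}=\sum_m\mathbb{I}[f(\theta_m,y)=f(\tilde\theta,y)]$, $K$ uniform on $\{0,\dots,N^{\mathtt{equals}}\}$, $N^{\mathtt{total}}=N^{\mathtt{less}}+K$;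 $R_{\phi,f}(i\mid\tilde\theta,y)=\Pr(N^{\mathtt{total}}\le i)$; $Q_{\phi,f}(i\mid y)=\int_\Theta\pi_{\text{post}}(\tilde\theta\mid y)R_{\phi,f}(i\mid\tilde\theta,y)\,\mathrm{d}\tilde\theta$; $\phi$ passes $M$-sample SBC w.r.t. $f$ if $\int_YQ_{\phi,f}(i\mid y)\pi_{\text{marg}}(y)\,\mathrm{d}y=\frac{i+1}{M+1}$ for all $i\in\{0,\dots,M-1\}$. Continuous quantities: $C_{\phi,f}(s\mid y)=\int_\Theta\mathbb{I}[f(\theta,y)\le s]\phi(\theta\mid y)\,\mathrm{d}\theta$, $D_{\phi,f}(s\mid y)=\int_\Theta\mathbb{I}[f(\theta,y)=s]\phi(\theta\mid y)\,\mathrm{d}\theta$; with $U\sim\mathrm{uniform}[0,1]$, $r_{\phi,f}(x\mid\tilde\theta,y)=\Pr\big(C_{\phi,f}(f(\tilde\theta,y)\mid y)-U\,D_{\phi,f}(f(\tilde\theta,y)\mid y)\le x\big)$, $q_{\phi,f}(x\mid y)=\int_\Theta\pi_{\text{post}}(\tilde\theta\mid y)r_{\phi,f}(x\mid\tilde\theta,y)\,\mathrm{d}\tilde\theta$. $\phi$ passes continuous SBC w.r.t. $f$ if $\int_Yq_{\phi,f}(x\mid y)\pi_{\text{marg}}(y)\,\mathrm{d}y=x$ for all $x\in[0,1]$. *)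

theory Defs
  imports "HOL-Probability.Probability"
begin

text \<open>Parameter space Theta is a measure space MT, data space Y is a measure space MY;
  all densities are taken with respect to these base measures.
  prior :: 'a => real is pi_prior, obs y theta is pi_obs(y | theta),
  phi theta y is phi(theta | y), f theta y is the test quantity.\<close>

definition is_model :: "'a measure \<Rightarrow> 'b measure \<Rightarrow> ('a \<Rightarrow> real) \<Rightarrow> ('b \<Rightarrow> 'a \<Rightarrow> real) \<Rightarrow> bool" where
  "is_model MT MY prior obs \<longleftrightarrow>
     prior \<in> borel_measurable MT \<and>
     (\<forall>\<theta>\<in>space MT. 0 \<le> prior \<theta>) \<and>
     (\<integral>\<theta>. prior \<theta> \<partial>MT) = 1 \<and>
     (\<lambda>(y, \<theta>). obs y \<theta>) \<in> borel_measurable (MY \<Otimes>\<^sub>M MT) \<and>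
     (\<forall>y\<in>space MY. \<forall>\<theta>\<in>space MT. 0 \<le> obs y \<theta>) \<and>
     (\<forall>\<theta>\<in>space MT. (\<integral>y. obs y \<theta> \<partial>MY) = 1)"

definition marg :: "'a measure \<Rightarrow> ('a \<Rightarrow> real) \<Rightarrow> ('b \<Rightarrow> 'a \<Rightarrow> real) \<Rightarrow> 'b \<Rightarrow> real" where
  "marg MT prior obs y = (\<integral>\<theta>. obs y \<theta> * prior \<theta> \<partial>MT)"

definition post :: "'a measure \<Rightarrow> ('a \<Rightarrow> real) \<Rightarrow> ('b \<Rightarrow> 'a \<Rightarrow> real) \<Rightarrow> 'a \<Rightarrow> 'b \<Rightarrow> real" where
  "post MT prior obs \<theta> y = obs y \<theta> * prior \<theta> / marg MT prior obs y"

definition posterior_family :: "'a measure \<Rightarrow> 'b measure \<Rightarrow> ('a \<Rightarrow> 'b \<Rightarrow> real) \<Rightarrow> bool" where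
  "posterior_family MT MY phi \<longleftrightarrow>
     (\<lambda>(\<theta>, y). phi \<theta> y) \<in> borel_measurable (MT \<Otimes>\<^sub>M MY) \<and>
     (\<forall>\<theta>\<in>space MT. \<forall>y\<in>space MY. 0 \<le> phi \<theta> y) \<and>
     (\<forall>y\<in>space MY. (\<integral>\<theta>. phi \<theta> y \<partial>MT) = 1)"

definition test_quantity :: "'a measure \<Rightarrow> 'b measure \<Rightarrow> ('a \<Rightarrow> 'b \<Rightarrow> real) \<Rightarrow> bool" where
  "test_quantity MT MY f \<longleftrightarrow> (\<lambda>(\<theta>, y). f \<theta> y) \<in> borel_measurable (MT \<Otimes>\<^sub>M MY)"

definition sample_space :: "'a measure \<Rightarrow> ('a \<Rightarrow> 'b \<Rightarrow> real) \<Rightarrow> nat \<Rightarrow> 'b \<Rightarrow> (nat \<Rightarrow> 'a) measure" where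
  "sample_space MT phi M y = (\<Pi>\<^sub>M m\<in>{..<M}. density MT (\<lambda>\<theta>. ennreal (phi \<theta> y)))"

definition N_less :: "('a \<Rightarrow> 'b \<Rightarrow> real) \<Rightarrow> nat \<Rightarrow> (nat \<Rightarrow> 'a) \<Rightarrow> 'a \<Rightarrow> 'b \<Rightarrow> nat" where
  "N_less f M \<omega> \<theta>t y = card {m\<in>{..<M}. f (\<omega> m) y < f \<theta>t y}"

definition N_equals :: "('a \<Rightarrow> 'b \<Rightarrow> real) \<Rightarrow> nat \<Rightarrow> (nat \<Rightarrow> 'a) \<Rightarrow> 'a \<Rightarrow> 'b \<Rightarrow> nat" where
  "N_equals f M \<omega> \<theta>t y = card {m\<in>{..<M}. f (\<omega> m) y = f \<theta>t y}"

text \<open>Conditional probability, given the samples omega, that N_total = N_less + K <= i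
  where K is uniform on {0..N_equals}.\<close>
definition rank_cond_prob :: "('a \<Rightarrow> 'b \<Rightarrow> real) \<Rightarrow> nat \<Rightarrow> nat \<Rightarrow> (nat \<Rightarrow> 'a) \<Rightarrow> 'a \<Rightarrow> 'b \<Rightarrow> real" where
  "rank_cond_prob f M i \<omega> \<theta>t y =
     real (card {k\<in>{0..N_equals f M \<omega> \<theta>t y}. N_less f M \<omega> \<theta>t y + k \<le> i})
     / real (N_equals f M \<omega> \<theta>t y + 1)"

definition R_rank :: "'a measure \<Rightarrow> ('a \<Rightarrow> 'b \<Rightarrow> real) \<Rightarrow> ('a \<Rightarrow> 'b \<Rightarrow> real) \<Rightarrow> nat \<Rightarrow> nat \<Rightarrow> 'a \<Rightarrow> 'b \<Rightarrow> real" where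
  "R_rank MT phi f M i \<theta>t y = (\<integral>\<omega>. rank_cond_prob f M i \<omega> \<theta>t y \<partial>sample_space MT phi M y)"

definition Q_rank :: "'a measure \<Rightarrow> ('a \<Rightarrow> real) \<Rightarrow> ('b \<Rightarrow> 'a \<Rightarrow> real) \<Rightarrow> ('a \<Rightarrow> 'b \<Rightarrow> real) \<Rightarrow> ('a \<Rightarrow> 'b \<Rightarrow> real) \<Rightarrow> nat \<Rightarrow> nat \<Rightarrow> 'b \<Rightarrow> real" where
  "Q_rank MT prior obs phi f M i y = (\<integral>\<theta>t. post MT prior obs \<theta>t y * R_rank MT phi f M i \<theta>t y \<partial>MT)"

definition passes_M_SBC :: "'a measure \<Rightarrow> 'b measure \<Rightarrow> ('a \<Rightarrow> real) \<Rightarrow> ('b \<Rightarrow> 'a \<Rightarrow> real) \<Rightarrow> ('a \<Rightarrow> 'b \<Rightarrow> real) \<Rightarrow> ('a \<Rightarrow> 'b \<Rightarrow> real) \<Rightarrow> nat \<Rightarrow> bool" where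
  "passes_M_SBC MT MY prior obs phi f M \<longleftrightarrow>
     (\<forall>i<M. (\<integral>y. Q_rank MT prior obs phi f M i y * marg MT prior obs y \<partial>MY) = real (i + 1) / real (M + 1))"

definition C_cdf :: "'a measure \<Rightarrow> ('a \<Rightarrow> 'b \<Rightarrow> real) \<Rightarrow> ('a \<Rightarrow> 'b \<Rightarrow> real) \<Rightarrow> real \<Rightarrow> 'b \<Rightarrow> real" where
  "C_cdf MT phi f s y = (\<integral>\<theta>. indicator {\<theta>. f \<theta> y \<le> s} \<theta> * phi \<theta> y \<partial>MT)"

definition D_atom :: "'a measure \<Rightarrow> ('a \<Rightarrow> 'b \<Rightarrow> real) \<Rightarrow> ('a \<Rightarrow> 'b \<Rightarrow> real) \<Rightarrow> real \<Rightarrow> 'b \<Rightarrow> real" where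
  "D_atom MT phi f s y = (\<integral>\<theta>. indicator {\<theta>. f \<theta> y = s} \<theta> * phi \<theta> y \<partial>MT)"

definition r_pit :: "'a measure \<Rightarrow> ('a \<Rightarrow> 'b \<Rightarrow> real) \<Rightarrow> ('a \<Rightarrow> 'b \<Rightarrow> real) \<Rightarrow> real \<Rightarrow> 'a \<Rightarrow> 'b \<Rightarrow> real" where
  "r_pit MT phi f x \<theta>t y =
     measure (uniform_measure lborel {0..1::real})
       {u. C_cdf MT phi f (f \<theta>t y) y - u * D_atom MT phi f (f \<theta>t y) y \<le> x}"

definition q_pit :: "'a measure \<Rightarrow> ('a \<Rightarrow> real) \<Rightarrow> ('b \<Rightarrow> 'a \<Rightarrow> real) \<Rightarrow> ('a \<Rightarrow> 'b \<Rightarrow> real) \<Rightarrow> ('a \<Rightarrow> 'b \<Rightarrow> real) \<Rightarrow> real \<Rightarrow> 'b \<Rightarrow> real" where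
  "q_pit MT prior obs phi f x y = (\<integral>\<theta>t. post MT prior obs \<theta>t y * r_pit MT phi f x \<theta>t y \<partial>MT)"

definition passes_cont_SBC :: "'a measure \<Rightarrow> 'b measure \<Rightarrow> ('a \<Rightarrow> real) \<Rightarrow> ('b \<Rightarrow> 'a \<Rightarrow> real) \<Rightarrow> ('a \<Rightarrow> 'b \<Rightarrow> real) \<Rightarrow> ('a \<Rightarrow> 'b \<Rightarrow> real) \<Rightarrow> bool" where
  "passes_cont_SBC MT MY prior obs phi f \<longleftrightarrow>
     (\<forall>x\<in>{0..1}. (\<integral>y. q_pit MT prior obs phi f x y * marg MT prior obs y \<partial>MY) = x)"

end

theory Submission imports Defs begin

fun bc :: "real \<Rightarrow> nat \<Rightarrow> int \<Rightarrow> real" where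
  "bc v 0 j = (if 0 \<le> j then 1 else 0)"
| "bc v (Suc n) j = v * bc v n (j - 1) + (1 - v) * bc v n j"

lemma bc_neg: "j < 0 \<Longrightarrow> bc v n j = 0"
  by (induction n arbitrary: j) auto

lemma bc_big: "int n \<le> j \<Longrightarrow> bc v n j = 1"
  by (induction n arbitrary: j) (auto simp: algebra_simps)

lemma bc_0: "bc 0 n j = (if 0 \<le> j then 1 else 0)"
  by (induction n arbitrary: j) auto

lemma bc_1: "bc 1 n j = (if int n \<le> j then 1 else 0)"
  by (induction n arbitrary: j) auto

lemma bc_bounds: "0 \<le> v \<Longrightarrow> v \<le> 1 \<Longrightarrow> 0 \<le> bc v n j \<and> bc v n j \<le> 1"
proof (induction n arbitrary: j)
  case (Suc n)
  then have a: "0 \<le> bc v n (j-1)" "bc v n (j-1) \<le> 1" "0 \<le> bc v n j" "bc v n j \<le> 1" by auto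
  have "v * bc v n (j - 1) + (1 - v) * bc v n j \<le> v * 1 + (1 - v) * 1"
    using a Suc.prems by (intro add_mono mult_left_mono) auto
  then show ?case using a Suc.prems by simp
qed auto

lemma bc_cont: "continuous_on UNIV (\<lambda>v. bc v n j)"
  by (induction n arbitrary: j) (auto intro!: continuous_intros)

lemma bc_meas[measurable]: "(\<lambda>v. bc v n j) \<in> borel_measurable borel"
  by (induction n arbitrary: j) auto

lemma bc_deriv: "((\<lambda>v. bc v (Suc n) j) has_real_derivative (real (Suc n) * (bc v n (j-1) - bc v n j))) (at v)"
proof (induction n arbitrary: j)
  case 0
  show ?case by (auto intro!: derivative_eq_intros)
next
  case (Suc n)
  have e: "(\<lambda>v. bc v (Suc (Suc n)) j) = (\<lambda>v. v * bc v (Suc n) (j - 1) + (1 - v) * bc v (Suc n) j)"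
    by simp
  show ?case unfolding e
    by (rule derivative_eq_intros Suc.IH refl)+ (simp add: algebra_simps)
qed

lemma bc_int_diff: "((\<lambda>v. bc v n (j-1) - bc v n j) has_integral
    ((if int (Suc n) \<le> j then 1 else 0) - (if 0 \<le> j then 1 else 0)) / real (Suc n)) {0..1}"
proof -
  have d: "((\<lambda>v. bc v (Suc n) j) has_vector_derivative (real (Suc n) * (bc x n (j-1) - bc x n j))) (at x within {0..1})" for x
    using has_field_derivative_at_within[OF bc_deriv[of n j x], of "{0..1}"]
    by (simp only: has_real_derivative_iff_has_vector_derivative)
  have "((\<lambda>v. real (Suc n) * (bc v n (j-1) - bc v n j)) has_integral (bc 1 (Suc n) j - bc 0 (Suc n) j)) {0..1}"
    by (rule fundamental_theorem_of_calculus[OF _ d]) simp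
  from has_integral_mult_right[OF this, of "1 / real (Suc n)"]
  have h: "((\<lambda>v. 1 / real (Suc n) * (real (Suc n) * (bc v n (j-1) - bc v n j))) has_integral
     (1 / real (Suc n) * (bc 1 (Suc n) j - bc 0 (Suc n) j))) {0..1}" .
  have e1: "(\<lambda>v. 1 / real (Suc n) * (real (Suc n) * (bc v n (j-1) - bc v n j))) = (\<lambda>v. bc v n (j-1) - bc v n j)"
    by (rule ext) (simp del: bc.simps)
  have e2: "1 / real (Suc n) * (bc 1 (Suc n) j - bc 0 (Suc n) j) = ((if int (Suc n) \<le> j then 1 else 0) - (if 0 \<le> j then 1 else 0)) / real (Suc n)"
    by (simp only: bc_0 bc_1) simp
  show ?thesis using h unfolding e1 e2 .
qed

lemma bc_integrable: "(\<lambda>v. bc v n j) integrable_on {a..b}"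
  by (rule integrable_continuous_interval) (rule continuous_on_subset[OF bc_cont], simp)

lemma bc_integral: "integral {0..1} (\<lambda>v. bc v n j) = min (max (j + 1) 0) (int n + 1) / real (Suc n)"
proof (cases "j < 0")
  case True then show ?thesis by (simp add: bc_neg)
next
  case False
  then have "j \<ge> -1" by simp
  then show ?thesis
  proof (induction j rule: int_ge_induct)
    case base then show ?case by (simp add: bc_neg)
  next
    case (step i)
    have "integral {0..1} (\<lambda>v. bc v n i - bc v n (i+1)) = integral {0..1} (\<lambda>v. bc v n i) - integral {0..1} (\<lambda>v. bc v n (i+1))"
      by (rule integral_diff) (rule bc_integrable)+
    moreover have "integral {0..1} (\<lambda>v. bc v n i - bc v n (i+1)) = ((if int (Suc n) \<le> i+1 then 1 else 0) - (if 0 \<le> i+1 then 1 else 0)) / real (Suc n)"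
      using integral_unique[OF bc_int_diff[of n "i+1"]] by simp
    ultimately have "integral {0..1} (\<lambda>v. bc v n (i+1)) = min (max (i + 1) 0) (int n + 1) / real (Suc n) - ((if int (Suc n) \<le> i+1 then 1 else 0) - (if 0 \<le> i+1 then 1 else 0)) / real (Suc n)"
      using step.IH by simp
    also have "\<dots> = min (max (i + 1 + 1) 0) (int n + 1) / real (Suc n)"
      using step.hyps by (simp add: diff_divide_distrib[symmetric])
    finally show ?case .
  qed
qed

lemma bc_integral_refl: "integral {0..1} (\<lambda>u. bc (1 - u) n j) = min (max (j + 1) 0) (int n + 1) / real (Suc n)"
proof -
  have c: "continuous_on {-1..0} (\<lambda>u. bc (1 + u) n j)"
    by (rule continuous_on_compose2[OF bc_cont, of _ "\<lambda>u. 1 + u"]) (auto intro!: continuous_intros)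
  have "((\<lambda>u. bc (1 + u) n j) has_integral integral {-1..0} (\<lambda>u. bc (1 + u) n j)) {-1..0}"
    using integrable_continuous_interval[OF c] by (rule integrable_integral)
  then have "((\<lambda>x. bc (1 + - x) n j) has_integral integral {-1..0} (\<lambda>u. bc (1 + u) n j)) {-0..- (-1)}"
    by (subst has_integral_reflect_real[where f="\<lambda>u. bc (1 + u) n j"])
  then have "((\<lambda>x. bc (1 - x) n j) has_integral integral {-1..0} (\<lambda>u. bc (1 + u) n j)) {0..1}"
    by simp
  then have "integral {0..1} (\<lambda>u. bc (1 - u) n j) = integral {-1..0} (\<lambda>u. bc (1 + u) n j)"
    by (rule integral_unique)
  also have "\<dots> = integral {0..1} (\<lambda>v. bc v n j)"
    using integral_shift_Icc_real[of "-1" 0 "\<lambda>v. bc v n j" 1] by (simp add: comp_def)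
  finally show ?thesis by (simp add: bc_integral)
qed

lemma three_way:
  fixes g :: "'a \<Rightarrow> real"
  assumes P: "prob_space N" and g[measurable]: "g \<in> borel_measurable N"
  shows "(\<integral>\<theta>. (if g \<theta> < T then A else if g \<theta> = T then B else C) \<partial>N)
     = measure N {\<theta>\<in>space N. g \<theta> < T} * A + measure N {\<theta>\<in>space N. g \<theta> = T} * B
       + (1 - measure N {\<theta>\<in>space N. g \<theta> < T} - measure N {\<theta>\<in>space N. g \<theta> = T}) * C"
proof -
  interpret prob_space N by (rule P)
  let ?L = "{\<theta>\<in>space N. g \<theta> < T}" and ?E = "{\<theta>\<in>space N. g \<theta> = T}"
  have [measurable]: "?L \<in> sets N" "?E \<in> sets N" by measurable
  have "(\<integral>\<theta>. (if g \<theta> < T then A else if g \<theta> = T then B else C) \<partial>N)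
      = (\<integral>\<theta>. C + ((A - C) * indicator ?L \<theta> + (B - C) * indicator ?E \<theta>) \<partial>N)"
    by (rule Bochner_Integration.integral_cong) (auto simp: indicator_def)
  also have "\<dots> = C + ((A - C) * measure N ?L + (B - C) * measure N ?E)"
  proof -
    have ii1: "integrable N (indicator ?L :: _ \<Rightarrow> real)"
      by (rule integrable_real_indicator) (simp_all add: less_top[symmetric])
    have ii2: "integrable N (indicator ?E :: _ \<Rightarrow> real)"
      by (rule integrable_real_indicator) (simp_all add: less_top[symmetric])
    note ii = ii1 ii2
    have i1: "integrable N (\<lambda>\<theta>. (A - C) * indicator ?L \<theta>)"
      by (intro integrable_mult_right ii)
    have i2: "integrable N (\<lambda>\<theta>. (B - C) * indicator ?E \<theta>)"
      by (intro integrable_mult_right ii)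
    have e1: "(\<integral>\<theta>. C + ((A - C) * indicator ?L \<theta> + (B - C) * indicator ?E \<theta>) \<partial>N)
       = (\<integral>\<theta>. C \<partial>N) + (\<integral>\<theta>. ((A - C) * indicator ?L \<theta> + (B - C) * indicator ?E \<theta>) \<partial>N)"
      by (rule Bochner_Integration.integral_add[OF integrable_const Bochner_Integration.integrable_add[OF i1 i2]])
    have e2: "(\<integral>\<theta>. ((A - C) * indicator ?L \<theta> + (B - C) * indicator ?E \<theta>) \<partial>N)
       = (\<integral>\<theta>. (A - C) * indicator ?L \<theta> \<partial>N) + (\<integral>\<theta>. (B - C) * indicator ?E \<theta> \<partial>N)"
      by (rule Bochner_Integration.integral_add[OF i1 i2])
    have e3: "(\<integral>\<theta>. (A - C) * indicator ?L \<theta> \<partial>N) = (A - C) * measure N ?L"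
      by (simp only: integral_mult_right_zero integral_indicator) (simp add: Int_absorb2 sets.sets_into_space)
    have e4: "(\<integral>\<theta>. (B - C) * indicator ?E \<theta> \<partial>N) = (B - C) * measure N ?E"
      by (simp only: integral_mult_right_zero integral_indicator) (simp add: Int_absorb2 sets.sets_into_space)
    show ?thesis unfolding e1 e2 e3 e4 by (simp add: prob_space)
  qed
  finally show ?thesis by (simp add: algebra_simps)
qed

lemma bc_case:
  fixes g T :: real
  shows "bc w (b + (if g = T then 1 else 0)) (j - int (a + (if g < T then 1 else 0)))
    = (if g < T then bc w b ((j - 1) - int a) else if g = T then bc w (Suc b) (j - int a) else bc w b (j - int a))"
  by (simp del: bc.simps add: algebra_simps)

lemma meas_card_Pi:
  fixes g :: "'a \<Rightarrow> real" and K :: nat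
  assumes [measurable]: "g \<in> borel_measurable N" "R \<in> measurable borel (count_space UNIV)" and KI: "{..<K} \<subseteq> I"
  shows "(\<lambda>z. card {m\<in>{..<K}. R (g (z m))}) \<in> measurable (PiM I (\<lambda>_. N)) (count_space UNIV)"
proof (rule measurable_card)
  fix i
  show "{x \<in> space (Pi\<^sub>M I (\<lambda>_. N)). i \<in> {m \<in> {..<K}. R (g (x m))}} \<in> sets (Pi\<^sub>M I (\<lambda>_. N))"
  proof (cases "i < K")
    case True
    then have "i \<in> I" using KI by auto
    then show ?thesis by simp
  qed simp
qed

lemma card_upd_Suc:
  "card {m\<in>{..<Suc M}. P ((z(M := \<theta>)) m)} = card {m\<in>{..<M}. P (z m)} + (if P \<theta> then 1 else 0)"
proof -
  have e: "{m\<in>{..<Suc M}. P ((z(M := \<theta>)) m)} = {m\<in>{..<M}. P (z m)} \<union> (if P \<theta> then {M} else {})"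
    by (auto simp: less_Suc_eq)
  show ?thesis unfolding e by (auto simp: card_insert_if)
qed

lemma sample_induct:
  fixes g :: "'a \<Rightarrow> real"
  assumes P: "prob_space N" and g[measurable]: "g \<in> borel_measurable N" and w: "0 \<le> w" "w \<le> 1"
  shows "(\<integral>z. bc w (card {m\<in>{..<M}. g (z m) = T}) (j - int (card {m\<in>{..<M}. g (z m) < T})) \<partial>PiM {..<M} (\<lambda>_. N))
     = bc (measure N {\<theta>\<in>space N. g \<theta> < T} + w * measure N {\<theta>\<in>space N. g \<theta> = T}) M j"
proof (induction M arbitrary: j)
  case 0
  interpret PP: prob_space "PiM ({}::nat set) (\<lambda>_. N)" by (rule prob_space_PiM) (simp add: P)
  show ?case by (simp add: PP.prob_space)
next
  case (Suc M)
  interpret prob_space N by (rule P)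
  interpret PS: product_sigma_finite "\<lambda>_::nat. N" by unfold_locales
  interpret PP: prob_space "PiM {..<M} (\<lambda>_. N)" by (rule prob_space_PiM) (simp add: P)
  let ?p = "measure N {\<theta>\<in>space N. g \<theta> < T}" and ?q = "measure N {\<theta>\<in>space N. g \<theta> = T}"
  let ?v = "?p + w * ?q"
  define a where "a z = card {m\<in>{..<M}. g (z m) < T}" for z :: "nat \<Rightarrow> 'a"
  define b where "b z = card {m\<in>{..<M}. g (z m) = T}" for z :: "nat \<Rightarrow> 'a"
  have meas_card: "(\<lambda>z. card {m\<in>{..<K}. R (g (z m))}) \<in> measurable (PiM I (\<lambda>_. N)) (count_space UNIV)"
    if [measurable]: "R \<in> measurable borel (count_space UNIV)" "{..<K} \<subseteq> I" for R and K :: nat and I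
  proof (rule measurable_card)
    fix i
    show "{x \<in> space (Pi\<^sub>M I (\<lambda>_. N)). i \<in> {m \<in> {..<K}. R (g (x m))}} \<in> sets (Pi\<^sub>M I (\<lambda>_. N))"
    proof (cases "i < K")
      case True
      then have "i \<in> I" using that by auto
      then show ?thesis by simp
    qed simp
  qed
  have bnd: "\<bar>bc w n k\<bar> \<le> 1" for n k using bc_bounds[OF w, of n k] by simp
  have integ: "integrable (PiM I (\<lambda>_. N)) (\<lambda>z. bc w (card {m\<in>{..<K}. g (z m) = T}) (k - int (card {m\<in>{..<K}. g (z m) < T})))"
    if "{..<K} \<subseteq> I" "finite I" for K :: nat and I k
  proof -
    interpret Q: prob_space "PiM I (\<lambda>_. N)" by (rule prob_space_PiM) (simp add: P)
    have m1[measurable]: "(\<lambda>z. card {m\<in>{..<K}. g (z m) = T}) \<in> measurable (PiM I (\<lambda>_. N)) (count_space UNIV)"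
      by (rule meas_card[OF _ that(1)]) measurable
    have m2[measurable]: "(\<lambda>z. card {m\<in>{..<K}. g (z m) < T}) \<in> measurable (PiM I (\<lambda>_. N)) (count_space UNIV)"
      by (rule meas_card[OF _ that(1)]) measurable
    show ?thesis
      by (rule Q.integrable_const_bound[where B=1]) (rule AE_I2, simp add: bnd, measurable)
  qed
  have "(\<integral>z. bc w (card {m\<in>{..<Suc M}. g (z m) = T}) (j - int (card {m\<in>{..<Suc M}. g (z m) < T})) \<partial>PiM {..<Suc M} (\<lambda>_. N))
      = (\<integral>z. bc w (card {m\<in>{..<Suc M}. g (z m) = T}) (j - int (card {m\<in>{..<Suc M}. g (z m) < T})) \<partial>PiM (insert M {..<M}) (\<lambda>_. N))"
    by (simp add: lessThan_Suc)
  also have "\<dots> = (\<integral>z. (\<integral>\<theta>. bc w (card {m\<in>{..<Suc M}. g ((z(M:=\<theta>)) m) = T}) (j - int (card {m\<in>{..<Suc M}. g ((z(M:=\<theta>)) m) < T})) \<partial>N) \<partial>PiM {..<M} (\<lambda>_. N))"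
  proof (rule PS.product_integral_insert)
    show "integrable (PiM (insert M {..<M}) (\<lambda>_. N)) (\<lambda>z. bc w (card {m\<in>{..<Suc M}. g (z m) = T}) (j - int (card {m\<in>{..<Suc M}. g (z m) < T})))"
      by (rule integ) auto
  qed auto
  also have "\<dots> = (\<integral>z. (\<integral>\<theta>. (if g \<theta> < T then bc w (b z) ((j - 1) - int (a z)) else if g \<theta> = T then bc w (Suc (b z)) (j - int (a z)) else bc w (b z) (j - int (a z))) \<partial>N) \<partial>PiM {..<M} (\<lambda>_. N))"
    by (simp only: card_upd_Suc[where P="\<lambda>x. g x = T"] card_upd_Suc[where P="\<lambda>x. g x < T"] bc_case a_def b_def)
  also have "\<dots> = (\<integral>z. ?v * bc w (b z) ((j - 1) - int (a z)) + (1 - ?v) * bc w (b z) (j - int (a z)) \<partial>PiM {..<M} (\<lambda>_. N))"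
    by (intro Bochner_Integration.integral_cong refl, subst three_way[OF P g]) (simp add: algebra_simps)
  also have "\<dots> = ?v * bc ?v M (j - 1) + (1 - ?v) * bc ?v M j"
  proof -
    have I1: "integrable (PiM {..<M} (\<lambda>_. N)) (\<lambda>z. bc w (b z) ((j - 1) - int (a z)))"
      using integ[of M "{..<M}" "j - 1"] unfolding a_def b_def by simp
    have I0: "integrable (PiM {..<M} (\<lambda>_. N)) (\<lambda>z. bc w (b z) (j - int (a z)))"
      using integ[of M "{..<M}" "j"] unfolding a_def b_def by simp
    show ?thesis
      unfolding Bochner_Integration.integral_add[OF integrable_mult_right[OF I1] integrable_mult_right[OF I0]] integral_mult_right_zero
      using Suc.IH[of "j - 1"] Suc.IH[of j] unfolding a_def b_def by simp
  qed
  also have "\<dots> = bc ?v (Suc M) j" by simp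
  finally show ?case .
qed

abbreviation U01 :: "real measure" where "U01 \<equiv> uniform_measure lborel {0..1::real}"

definition clamp01 :: "real \<Rightarrow> real" where "clamp01 x = max 0 (min 1 x)"

lemma clamp01_cont: "continuous_on S clamp01"
  unfolding clamp01_def by (intro continuous_intros)

lemma clamp01_meas[measurable]: "clamp01 \<in> borel_measurable borel"
  unfolding clamp01_def by measurable

lemma clamp01_bounds: "0 \<le> clamp01 x" "clamp01 x \<le> 1"
  unfolding clamp01_def by auto

lemma clamp01_id: "0 \<le> x \<Longrightarrow> x \<le> 1 \<Longrightarrow> clamp01 x = x"
  unfolding clamp01_def by auto

lemma U01_prob: "prob_space U01"
  by (rule prob_space_uniform_measure) auto

lemma U01_AE: "AE u in U01. 0 \<le> u \<and> u \<le> 1"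
  by (rule AE_uniform_measureI) auto

lemma U01_integral:
  fixes h :: "real \<Rightarrow> real"
  assumes hc: "continuous_on UNIV h"
  shows "(\<integral>u. h u \<partial>U01) = integral {0..1} h"
proof -
  have e: "U01 = density lborel (\<lambda>x. ennreal (indicator {0..1::real} x))"
    unfolding uniform_measure_def by (simp add: ennreal_indicator divide_ennreal_def)
  have "(\<integral>u. h u \<partial>U01) = (\<integral>x. indicator {0..1::real} x *\<^sub>R h x \<partial>lborel)"
    unfolding e
    using integral_density[of h lborel "indicator {0..1}"] borel_measurable_continuous_onI[OF hc]
    by simp
  also have "\<dots> = integral {0..1} h"
    using set_borel_integral_eq_integral(2)[of "{0..1}" h] borel_integrable_compact[OF _ continuous_on_subset[OF hc]]
    by (simp add: set_lebesgue_integral_def set_integrable_def)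
  finally show ?thesis .
qed

lemma card_k: "real (card {k\<in>{0..b}. a + k \<le> (i::nat)}) = real_of_int (min (max (int i - int a + 1) 0) (int b + 1))"
proof (cases "a \<le> i")
  case True
  then have "{k\<in>{0..b}. a + k \<le> i} = {0..min b (i - a)}" by auto
  then show ?thesis using True by (simp add: min_def) arith
next
  case False
  then have "{k\<in>{0..b}. a + k \<le> i} = {}" by auto
  then show ?thesis using False by simp
qed

lemma rcp_formula:
  "rank_cond_prob f M i z t y =
     (\<integral>u. bc (clamp01 (1 - u)) (N_equals f M z t y) (int i - int (N_less f M z t y)) \<partial>U01)"
proof -
  define a where "a = N_less f M z t y"
  define b where "b = N_equals f M z t y"
  have c: "continuous_on UNIV (\<lambda>u. bc (clamp01 (1 - u)) b (int i - int a))"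
    by (rule continuous_on_compose2[OF bc_cont, of _ "\<lambda>u. clamp01 (1 - u)"])
       (auto intro!: continuous_on_compose2[OF clamp01_cont] continuous_intros)
  have "(\<integral>u. bc (clamp01 (1 - u)) b (int i - int a) \<partial>U01) = integral {0..1} (\<lambda>u. bc (clamp01 (1 - u)) b (int i - int a))"
    by (rule U01_integral[OF c])
  also have "\<dots> = integral {0..1} (\<lambda>u. bc (1 - u) b (int i - int a))"
    by (rule integral_cong) (simp add: clamp01_id)
  also have "\<dots> = min (max (int i - int a + 1) 0) (int b + 1) / real (Suc b)"
    by (simp add: bc_integral_refl)
  also have "\<dots> = rank_cond_prob f M i z t y"
    unfolding rank_cond_prob_def a_def[symmetric] b_def[symmetric] card_k by simp
  finally show ?thesis unfolding a_def b_def by simp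
qed

lemma bc_meas_comp:
  assumes n: "n \<in> measurable M (count_space UNIV)" and k: "k \<in> measurable M (count_space UNIV)"
    and v[measurable]: "v \<in> borel_measurable M"
  shows "(\<lambda>x. bc (v x) (n x) (k x)) \<in> borel_measurable M"
proof -
  have "(\<lambda>x. bc (v x) nn (k x)) \<in> borel_measurable M" for nn
    by (rule measurable_compose_countable'[where f="\<lambda>kk x. bc (v x) nn kk" and g=k and I=UNIV])
       (auto intro: k)
  then show ?thesis
    by (rule measurable_compose_countable'[where f="\<lambda>nn x. bc (v x) nn (k x)" and g=n and I=UNIV])
       (auto intro: n)
qed

lemma R_formula:
  fixes MT :: "'a measure" and phi f :: "'a \<Rightarrow> 'b \<Rightarrow> real"
  assumes phim[measurable]: "(\<lambda>\<theta>. phi \<theta> y) \<in> borel_measurable MT"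
    and phinn: "\<And>\<theta>. \<theta> \<in> space MT \<Longrightarrow> 0 \<le> phi \<theta> y"
    and phi1: "(\<integral>\<theta>. phi \<theta> y \<partial>MT) = 1"
    and fm[measurable]: "(\<lambda>\<theta>. f \<theta> y) \<in> borel_measurable MT"
  shows "R_rank MT phi f M i t y = (\<integral>u. bc (C_cdf MT phi f (f t y) y - u * D_atom MT phi f (f t y) y) M (int i) \<partial>U01)"
proof -
  define N where "N = density MT (\<lambda>\<theta>. ennreal (phi \<theta> y))"
  define T where "T = f t y"
  have phiint: "integrable MT (\<lambda>\<theta>. phi \<theta> y)"
    using phi1 not_integrable_integral_eq by force
  have [simp]: "space N = space MT" "sets N = sets MT" unfolding N_def by simp_all
  have PN: "prob_space N"
  proof (rule prob_spaceI)
    have "emeasure N (space N) = (\<integral>\<^sup>+\<theta>. ennreal (phi \<theta> y) * indicator (space MT) \<theta> \<partial>MT)"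
      unfolding N_def by (simp add: emeasure_density)
    also have "\<dots> = (\<integral>\<^sup>+\<theta>. ennreal (phi \<theta> y) \<partial>MT)"
      by (rule nn_integral_cong) simp
    also have "\<dots> = ennreal (\<integral>\<theta>. phi \<theta> y \<partial>MT)"
      by (rule nn_integral_eq_integral[OF phiint]) (simp add: phinn)
    finally show "emeasure N (space N) = 1" by (simp add: phi1)
  qed
  interpret N: prob_space N by (rule PN)
  have gm[measurable]: "(\<lambda>\<theta>. f \<theta> y) \<in> borel_measurable N"
  proof -
    have e: "borel_measurable N = borel_measurable MT" by (rule measurable_cong_sets) simp_all
    show ?thesis unfolding e by (rule fm)
  qed
  have meas_N: "measure N A = (\<integral>\<theta>. indicator A \<theta> * phi \<theta> y \<partial>MT)" if A: "A \<in> sets MT" for A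
  proof -
    have "measure N A = (\<integral>\<theta>. indicator A \<theta> \<partial>N)"
      using A sets.sets_into_space[OF A] by (simp add: Int_absorb2)
    also have "\<dots> = (\<integral>\<theta>. phi \<theta> y *\<^sub>R indicator A \<theta> \<partial>MT)"
      unfolding N_def using A by (intro integral_density) (auto simp: phinn)
    finally show ?thesis by (simp add: mult.commute)
  qed
  define p where "p = measure N {\<theta>\<in>space N. f \<theta> y < T}"
  define q where "q = measure N {\<theta>\<in>space N. f \<theta> y = T}"
  have Lsets[measurable]: "{\<theta>\<in>space MT. f \<theta> y < T} \<in> sets MT" "{\<theta>\<in>space MT. f \<theta> y = T} \<in> sets MT"
    by measurable
  have p_eq: "p = (\<integral>\<theta>. indicator {\<theta>\<in>space MT. f \<theta> y < T} \<theta> * phi \<theta> y \<partial>MT)"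
    unfolding p_def using meas_N[OF Lsets(1)] by simp
  have q_eq: "q = (\<integral>\<theta>. indicator {\<theta>\<in>space MT. f \<theta> y = T} \<theta> * phi \<theta> y \<partial>MT)"
    unfolding q_def using meas_N[OF Lsets(2)] by simp
  have D_eq: "D_atom MT phi f (f t y) y = q"
    unfolding q_eq D_atom_def T_def by (rule Bochner_Integration.integral_cong) (auto simp: indicator_def)
  have C_eq: "C_cdf MT phi f (f t y) y = p + q"
  proof -
    have i1: "integrable MT (\<lambda>\<theta>. indicator {\<theta>\<in>space MT. f \<theta> y < T} \<theta> * phi \<theta> y)"
      using integrable_real_mult_indicator[OF Lsets(1) phiint] by (simp add: mult.commute)
    have i2: "integrable MT (\<lambda>\<theta>. indicator {\<theta>\<in>space MT. f \<theta> y = T} \<theta> * phi \<theta> y)"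
      using integrable_real_mult_indicator[OF Lsets(2) phiint] by (simp add: mult.commute)
    have "C_cdf MT phi f (f t y) y = (\<integral>\<theta>. indicator {\<theta>\<in>space MT. f \<theta> y < T} \<theta> * phi \<theta> y + indicator {\<theta>\<in>space MT. f \<theta> y = T} \<theta> * phi \<theta> y \<partial>MT)"
      unfolding C_cdf_def T_def by (rule Bochner_Integration.integral_cong) (auto simp: indicator_def)
    also have "\<dots> = p + q"
      unfolding p_eq q_eq by (rule Bochner_Integration.integral_add[OF i1 i2])
    finally show ?thesis .
  qed
  define S where "S = PiM {..<M} (\<lambda>_. N)"
  interpret S: prob_space S unfolding S_def by (rule prob_space_PiM) (simp add: PN)
  interpret U: prob_space U01 by (rule U01_prob)
  interpret SU: pair_sigma_finite S U01
    by (intro pair_sigma_finite.intro S.sigma_finite_measure_axioms U.sigma_finite_measure_axioms)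
  interpret SUp: prob_space "S \<Otimes>\<^sub>M U01" by (intro prob_space_pair S.prob_space_axioms U.prob_space_axioms)
  have mE: "(\<lambda>z. N_equals f M z t y) \<in> measurable S (count_space UNIV)"
    unfolding S_def N_equals_def by (rule meas_card_Pi[OF gm]) auto
  have mL: "(\<lambda>z. N_less f M z t y) \<in> measurable S (count_space UNIV)"
    unfolding S_def N_less_def by (rule meas_card_Pi[OF gm]) auto
  define G where "G z u = bc (clamp01 (1 - u)) (N_equals f M z t y) (int i - int (N_less f M z t y))" for z u
  have Gm: "(\<lambda>(z, u). G z u) \<in> borel_measurable (S \<Otimes>\<^sub>M U01)"
    unfolding G_def split_beta'
  proof (rule bc_meas_comp)
    show "(\<lambda>x. N_equals f M (fst x) t y) \<in> measurable (S \<Otimes>\<^sub>M U01) (count_space UNIV)"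
      by (rule measurable_compose[OF measurable_fst mE])
    have "(\<lambda>x. N_less f M (fst x) t y) \<in> measurable (S \<Otimes>\<^sub>M U01) (count_space UNIV)"
      by (rule measurable_compose[OF measurable_fst mL])
    then show "(\<lambda>x. int i - int (N_less f M (fst x) t y)) \<in> measurable (S \<Otimes>\<^sub>M U01) (count_space UNIV)"
      by (rule measurable_compose) simp
    have "(\<lambda>x. 1 - snd x) \<in> borel_measurable (S \<Otimes>\<^sub>M U01)"
      by measurable
    then show "(\<lambda>x. clamp01 (1 - snd x)) \<in> borel_measurable (S \<Otimes>\<^sub>M U01)"
      by (rule measurable_compose[OF _ clamp01_meas])
  qed
  have Gb: "\<bar>G z u\<bar> \<le> 1" for z u
  proof -
    have "0 \<le> G z u \<and> G z u \<le> 1" unfolding G_def by (rule bc_bounds[OF clamp01_bounds])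
    then show ?thesis by simp
  qed
  have Gi: "integrable (S \<Otimes>\<^sub>M U01) (\<lambda>(z, u). G z u)"
    by (rule SUp.integrable_const_bound[where B=1]) (auto intro!: AE_I2 Gm simp: Gb)
  have "R_rank MT phi f M i t y = (\<integral>z. rank_cond_prob f M i z t y \<partial>S)"
    unfolding R_rank_def sample_space_def S_def N_def ..
  also have "\<dots> = (\<integral>z. (\<integral>u. G z u \<partial>U01) \<partial>S)"
    unfolding G_def by (rule Bochner_Integration.integral_cong[OF refl rcp_formula])
  also have "\<dots> = (\<integral>u. (\<integral>z. G z u \<partial>S) \<partial>U01)"
    by (rule SU.Fubini_integral[symmetric, OF Gi])
  also have "\<dots> = (\<integral>u. bc (p + clamp01 (1 - u) * q) M (int i) \<partial>U01)"
  proof (rule Bochner_Integration.integral_cong[OF refl])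
    fix u
    show "(\<integral>z. G z u \<partial>S) = bc (p + clamp01 (1 - u) * q) M (int i)"
      unfolding G_def S_def N_equals_def N_less_def p_def q_def T_def
      by (rule sample_induct[OF PN gm clamp01_bounds])
  qed
  also have "\<dots> = (\<integral>u. bc (C_cdf MT phi f (f t y) y - u * D_atom MT phi f (f t y) y) M (int i) \<partial>U01)"
  proof (rule integral_cong_AE)
    show "AE u in U01. bc (p + clamp01 (1 - u) * q) M (int i) = bc (C_cdf MT phi f (f t y) y - u * D_atom MT phi f (f t y) y) M (int i)"
      using U01_AE by eventually_elim (simp add: clamp01_id C_eq D_eq algebra_simps)
  qed measurable
  finally show ?thesis .
qed

lemma U01_real_distribution: "real_distribution U01"
  unfolding real_distribution_def real_distribution_axioms_def using U01_prob by simp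

lemma U01_sets[simp, measurable_cong]: "sets U01 = sets borel" by simp

lemma U01_cdf: "0 \<le> x \<Longrightarrow> x \<le> 1 \<Longrightarrow> cdf U01 x = x"
proof -
  assume x: "0 \<le> x" "x \<le> 1"
  have "cdf U01 x = measure U01 {..x}" unfolding cdf_def ..
  also have "\<dots> = measure lborel ({0..1} \<inter> {..x}) / measure lborel {0..1::real}"
    by (rule measure_uniform_measure) auto
  also have "{0..1} \<inter> {..x} = {0..x}" using x by auto
  finally show ?thesis using x by simp
qed

lemma cdf_determined:
  assumes "real_distribution \<mu>" and F: "\<And>x. 0 \<le> x \<Longrightarrow> x \<le> 1 \<Longrightarrow> cdf \<mu> x = x"
  shows "\<mu> = U01"
proof (rule cdf_unique[OF assms(1) U01_real_distribution])
  interpret m: finite_borel_measure \<mu> by (rule real_distribution.finite_borel_measure_M[OF assms(1)])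
  interpret u: finite_borel_measure U01 by (rule real_distribution.finite_borel_measure_M[OF U01_real_distribution])
  have b1: "cdf \<mu> x \<le> 1" "cdf U01 x \<le> 1" for x
    using real_distribution.cdf_bounded_prob[OF assms(1)] real_distribution.cdf_bounded_prob[OF U01_real_distribution] by auto
  show "cdf \<mu> = cdf U01"
  proof
    fix x :: real
    consider "x < 0" | "0 \<le> x \<and> x \<le> 1" | "1 < x" by linarith
    then show "cdf \<mu> x = cdf U01 x"
    proof cases
      case 1
      then have "cdf \<mu> x \<le> cdf \<mu> 0" "cdf U01 x \<le> cdf U01 0"
        by (auto intro!: m.cdf_nondecreasing u.cdf_nondecreasing)
      then show ?thesis using F[of 0] U01_cdf[of 0] m.cdf_nonneg[of x] u.cdf_nonneg[of x] by simp
    next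
      case 2 then show ?thesis using F U01_cdf by simp
    next
      case 3
      then have "cdf \<mu> 1 \<le> cdf \<mu> x" "cdf U01 1 \<le> cdf U01 x"
        by (auto intro!: m.cdf_nondecreasing u.cdf_nondecreasing)
      then show ?thesis using F[of 1] U01_cdf[of 1] b1[of x] by simp
    qed
  qed
qed

lemma core:
  fixes N :: "'c measure" and w c d :: "'c \<Rightarrow> real" and h :: "real \<Rightarrow> real"
  assumes wm[measurable]: "w \<in> borel_measurable N" and cm[measurable]: "c \<in> borel_measurable N"
    and dm[measurable]: "d \<in> borel_measurable N"
    and wnn: "\<And>z. z \<in> space N \<Longrightarrow> 0 \<le> w z"
    and cd: "\<And>z. z \<in> space N \<Longrightarrow> 0 \<le> d z \<and> d z \<le> c z \<and> c z \<le> 1"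
    and hm[measurable]: "h \<in> borel_measurable borel" and hb: "\<And>x. \<bar>h x\<bar> \<le> B"
    and hyp: "\<And>x. 0 \<le> x \<Longrightarrow> x \<le> 1 \<Longrightarrow> (\<integral>z. w z * measure U01 {u. c z - u * d z \<le> x} \<partial>N) = x"
  shows "(\<integral>z. w z * (\<integral>u. h (c z - u * d z) \<partial>U01) \<partial>N) = (\<integral>u. h u \<partial>U01)"
proof -
  interpret U: prob_space U01 by (rule U01_prob)
  have m1: "measure U01 {u. c z - u * d z \<le> 1} = 1" if z: "z \<in> space N" for z
  proof -
    have "measure U01 {0..1} = 1"
      using measure_uniform_measure[of lborel "{0..1::real}" "{0..1}"] by simp
    moreover have "measure U01 {0..1} \<le> measure U01 {u. c z - u * d z \<le> 1}"
    proof (rule U.finite_measure_mono)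
      show "{0..1} \<subseteq> {u. c z - u * d z \<le> 1}"
      proof
        fix u :: real assume "u \<in> {0..1}"
        then have "0 \<le> u * d z" using cd[OF z] by simp
        then show "u \<in> {u. c z - u * d z \<le> 1}" using cd[OF z] by simp
      qed
      show "{u. c z - u * d z \<le> 1} \<in> sets U01" by simp
    qed
    ultimately show ?thesis using U.prob_le_1[of "{u. c z - u * d z \<le> 1}"] by simp
  qed
  have "(\<integral>z. w z \<partial>N) = (\<integral>z. w z * measure U01 {u. c z - u * d z \<le> 1} \<partial>N)"
    by (rule Bochner_Integration.integral_cong[OF refl]) (simp only: m1 mult_1_right)
  with hyp[of 1] have w1: "(\<integral>z. w z \<partial>N) = 1" by simp
  have wint: "integrable N w"
    using w1 not_integrable_integral_eq by force
  define Nw where "Nw = density N (\<lambda>z. ennreal (w z))"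
  have [simp]: "space Nw = space N" "sets Nw = sets N" unfolding Nw_def by simp_all
  have PNw: "prob_space Nw"
  proof (rule prob_spaceI)
    have "emeasure Nw (space Nw) = (\<integral>\<^sup>+z. ennreal (w z) * indicator (space N) z \<partial>N)"
      unfolding Nw_def by (simp add: emeasure_density)
    also have "\<dots> = (\<integral>\<^sup>+z. ennreal (w z) \<partial>N)"
      by (rule nn_integral_cong) simp
    also have "\<dots> = ennreal (\<integral>z. w z \<partial>N)"
      by (rule nn_integral_eq_integral[OF wint]) (simp add: wnn)
    finally show "emeasure Nw (space Nw) = 1" by (simp add: w1)
  qed
  interpret Nw: prob_space Nw by (rule PNw)
  interpret NU: pair_sigma_finite Nw U01
    by (intro pair_sigma_finite.intro Nw.sigma_finite_measure_axioms U.sigma_finite_measure_axioms)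
  interpret P: prob_space "Nw \<Otimes>\<^sub>M U01" by (intro prob_space_pair Nw.prob_space_axioms U.prob_space_axioms)
  have bmNw: "borel_measurable Nw = borel_measurable N" by (rule measurable_cong_sets) simp_all
  define V where "V p = c (fst p) - snd p * d (fst p)" for p
  have Vm[measurable]: "V \<in> borel_measurable (Nw \<Otimes>\<^sub>M U01)"
  proof -
    have [measurable]: "c \<in> borel_measurable Nw" "d \<in> borel_measurable Nw" unfolding bmNw by (rule cm, rule dm)
    show ?thesis unfolding V_def by measurable
  qed
  define mu where "mu = distr (Nw \<Otimes>\<^sub>M U01) borel V"
  have rd: "real_distribution mu"
    unfolding real_distribution_def real_distribution_axioms_def mu_def
    by (auto intro!: P.prob_space_distr)
  have key: "(\<integral>x. g x \<partial>mu) = (\<integral>z. w z * (\<integral>u. g (c z - u * d z) \<partial>U01) \<partial>N)"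
    if gm[measurable]: "g \<in> borel_measurable borel" and gb: "\<And>x. \<bar>g x\<bar> \<le> K" for g K
  proof -
    have gi: "integrable (Nw \<Otimes>\<^sub>M U01) (\<lambda>p. g (V p))"
      by (rule P.integrable_const_bound[where B=K]) (auto simp: gb)
    have "(\<integral>x. g x \<partial>mu) = (\<integral>p. g (V p) \<partial>(Nw \<Otimes>\<^sub>M U01))"
      unfolding mu_def by (rule integral_distr) simp_all
    also have "\<dots> = (\<integral>z. (\<integral>u. g (V (z, u)) \<partial>U01) \<partial>Nw)"
      by (rule NU.integral_fst'[symmetric]) (simp add: gi)
    also have "\<dots> = (\<integral>z. w z *\<^sub>R (\<integral>u. g (V (z, u)) \<partial>U01) \<partial>N)"
      unfolding Nw_def
    proof (rule integral_density)
      have "(\<lambda>z. \<integral>u. g (V (z, u)) \<partial>U01) \<in> borel_measurable Nw"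
        by (rule U.borel_measurable_lebesgue_integral) (simp add: split_beta')
      then show "(\<lambda>z. \<integral>u. g (V (z, u)) \<partial>U01) \<in> borel_measurable N" unfolding bmNw .
    qed (simp_all add: wnn)
    finally show ?thesis by (simp add: V_def)
  qed
  have "cdf mu x = x" if x: "0 \<le> x" "x \<le> 1" for x
  proof -
    have "cdf mu x = (\<integral>v. indicator {..x} v \<partial>mu)"
      unfolding cdf_def using real_distribution.events_eq_borel[OF rd]
      by (simp add: finite_borel_measure.borel_UNIV[OF real_distribution.finite_borel_measure_M[OF rd]])
    also have "\<dots> = (\<integral>z. w z * (\<integral>u. indicator {..x} (c z - u * d z) \<partial>U01) \<partial>N)"
      by (rule key[of _ 1]) (auto simp: indicator_def)
    also have "\<dots> = (\<integral>z. w z * measure U01 {u. c z - u * d z \<le> x} \<partial>N)"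
    proof (rule Bochner_Integration.integral_cong[OF refl])
      fix z
      have "(\<integral>u. indicator {..x} (c z - u * d z) \<partial>U01) = (\<integral>u. indicator {u. c z - u * d z \<le> x} u \<partial>U01)"
        by (rule Bochner_Integration.integral_cong) (auto simp: indicator_def)
      also have "\<dots> = measure U01 {u. c z - u * d z \<le> x}" by simp
      finally show "w z * (\<integral>u. indicator {..x} (c z - u * d z) \<partial>U01) = w z * measure U01 {u. c z - u * d z \<le> x}"
        by simp
    qed
    also have "\<dots> = x" by (rule hyp[OF x])
    finally show ?thesis .
  qed
  then have "mu = U01" by (rule cdf_determined[OF rd])
  then have "(\<integral>u. h u \<partial>U01) = (\<integral>x. h x \<partial>mu)" by simp
  also have "\<dots> = (\<integral>z. w z * (\<integral>u. h (c z - u * d z) \<partial>U01) \<partial>N)"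
    by (rule key[OF hm hb])
  finally show ?thesis ..
qed

lemma bcc_bound: "\<bar>bc (clamp01 x) n j\<bar> \<le> 1"
  using bc_bounds[OF clamp01_bounds, of x n j] by simp

lemma bcc_meas[measurable]: "(\<lambda>x. bc (clamp01 x) n j) \<in> borel_measurable borel"
  by (rule measurable_compose[OF clamp01_meas bc_meas])

lemma bcc_cont: "continuous_on UNIV (\<lambda>x. bc (clamp01 x) n j)"
  by (rule continuous_on_compose2[OF bc_cont clamp01_cont]) auto

lemma Rh_bound: "\<bar>\<integral>u. bc (clamp01 (a - u * b)) n j \<partial>U01\<bar> \<le> 1"
proof -
  interpret U: prob_space U01 by (rule U01_prob)
  have m: "(\<lambda>u. bc (clamp01 (a - u * b)) n j) \<in> borel_measurable U01"
  proof -
    have "(\<lambda>u. a - u * b) \<in> borel_measurable U01" by measurable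
    then show ?thesis by (rule measurable_compose[OF _ bcc_meas])
  qed
  have i: "integrable U01 (\<lambda>u. bc (clamp01 (a - u * b)) n j)"
    by (rule U.integrable_const_bound[where B=1]) (auto simp: bcc_bound m)
  have "\<bar>\<integral>u. bc (clamp01 (a - u * b)) n j \<partial>U01\<bar> \<le> (\<integral>u. \<bar>bc (clamp01 (a - u * b)) n j\<bar> \<partial>U01)"
    by (rule integral_abs_bound)
  also have "\<dots> \<le> (\<integral>u. 1 \<partial>U01)"
    by (rule Bochner_Integration.integral_mono) (auto intro: i bcc_bound)
  finally show ?thesis by (simp add: U.prob_space)
qed

lemma CD_bounds:
  fixes MT :: "'a measure" and phi f :: "'a \<Rightarrow> 'b \<Rightarrow> real"
  assumes phim[measurable]: "(\<lambda>\<theta>. phi \<theta> y) \<in> borel_measurable MT"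
    and phinn: "\<And>\<theta>. \<theta> \<in> space MT \<Longrightarrow> 0 \<le> phi \<theta> y"
    and phi1: "(\<integral>\<theta>. phi \<theta> y \<partial>MT) = 1"
    and fm[measurable]: "(\<lambda>\<theta>. f \<theta> y) \<in> borel_measurable MT"
  shows "0 \<le> D_atom MT phi f s y" "D_atom MT phi f s y \<le> C_cdf MT phi f s y" "C_cdf MT phi f s y \<le> 1"
proof -
  have phiint: "integrable MT (\<lambda>\<theta>. phi \<theta> y)"
    using phi1 not_integrable_integral_eq by force
  have e1: "(\<lambda>\<theta>. indicator {\<theta>. f \<theta> y = s} \<theta> * phi \<theta> y) = (\<lambda>\<theta>. if f \<theta> y = s then phi \<theta> y else 0)"
    by (auto simp: indicator_def)
  have e2: "(\<lambda>\<theta>. indicator {\<theta>. f \<theta> y \<le> s} \<theta> * phi \<theta> y) = (\<lambda>\<theta>. if f \<theta> y \<le> s then phi \<theta> y else 0)"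
    by (auto simp: indicator_def)
  have i1: "integrable MT (\<lambda>\<theta>. if f \<theta> y = s then phi \<theta> y else 0)"
    by (rule Bochner_Integration.integrable_bound[OF phiint]) auto
  have i2: "integrable MT (\<lambda>\<theta>. if f \<theta> y \<le> s then phi \<theta> y else 0)"
    by (rule Bochner_Integration.integrable_bound[OF phiint]) auto
  show "0 \<le> D_atom MT phi f s y"
    unfolding D_atom_def e1 by (rule Bochner_Integration.integral_nonneg) (auto simp: phinn)
  show "D_atom MT phi f s y \<le> C_cdf MT phi f s y"
    unfolding D_atom_def C_cdf_def e1 e2 by (rule Bochner_Integration.integral_mono[OF i1 i2]) (auto simp: phinn)
  show "C_cdf MT phi f s y \<le> 1"
    unfolding C_cdf_def e2 phi1[symmetric] by (rule Bochner_Integration.integral_mono[OF i2 phiint]) (auto simp: phinn)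
qed

lemma R_formula_h:
  fixes MT :: "'a measure" and phi f :: "'a \<Rightarrow> 'b \<Rightarrow> real"
  assumes phim[measurable]: "(\<lambda>\<theta>. phi \<theta> y) \<in> borel_measurable MT"
    and phinn: "\<And>\<theta>. \<theta> \<in> space MT \<Longrightarrow> 0 \<le> phi \<theta> y"
    and phi1: "(\<integral>\<theta>. phi \<theta> y \<partial>MT) = 1"
    and fm[measurable]: "(\<lambda>\<theta>. f \<theta> y) \<in> borel_measurable MT"
  shows "R_rank MT phi f M i t y = (\<integral>u. bc (clamp01 (C_cdf MT phi f (f t y) y - u * D_atom MT phi f (f t y) y)) M (int i) \<partial>U01)"
proof -
  note b = CD_bounds[where MT=MT and phi=phi and f=f and y=y and s="f t y", OF phim phinn phi1 fm]
  have "R_rank MT phi f M i t y = (\<integral>u. bc (C_cdf MT phi f (f t y) y - u * D_atom MT phi f (f t y) y) M (int i) \<partial>U01)"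
    by (rule R_formula[where MT=MT and phi=phi and f=f and y=y, OF phim phinn phi1 fm])
  also have "\<dots> = (\<integral>u. bc (clamp01 (C_cdf MT phi f (f t y) y - u * D_atom MT phi f (f t y) y)) M (int i) \<partial>U01)"
  proof (rule integral_cong_AE)
    show "AE u in U01. bc (C_cdf MT phi f (f t y) y - u * D_atom MT phi f (f t y) y) M (int i) = bc (clamp01 (C_cdf MT phi f (f t y) y - u * D_atom MT phi f (f t y) y)) M (int i)"
      using U01_AE
    proof eventually_elim
      case (elim u)
      then have "0 \<le> u * D_atom MT phi f (f t y) y" "u * D_atom MT phi f (f t y) y \<le> D_atom MT phi f (f t y) y"
        using b by (auto intro: mult_left_le_one_le)
      then show ?case using b by (subst clamp01_id) auto
    qed
    have "(\<lambda>u. C_cdf MT phi f (f t y) y - u * D_atom MT phi f (f t y) y) \<in> borel_measurable U01" by measurable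
    then show "(\<lambda>u. bc (clamp01 (C_cdf MT phi f (f t y) y - u * D_atom MT phi f (f t y) y)) M (int i)) \<in> borel_measurable U01"
      by (rule measurable_compose[OF _ bcc_meas])
    have "(\<lambda>u. C_cdf MT phi f (f t y) y - u * D_atom MT phi f (f t y) y) \<in> borel_measurable U01" by measurable
    then show "(\<lambda>u. bc (C_cdf MT phi f (f t y) y - u * D_atom MT phi f (f t y) y) M (int i)) \<in> borel_measurable U01"
      by (rule measurable_compose[OF _ bc_meas])
  qed
  finally show ?thesis .
qed

lemma final_core:
  fixes N :: "'c measure" and w c d :: "'c \<Rightarrow> real"
  assumes wm[measurable]: "w \<in> borel_measurable N" and cm[measurable]: "c \<in> borel_measurable N"
    and dm[measurable]: "d \<in> borel_measurable N"
    and wnn: "\<And>z. z \<in> space N \<Longrightarrow> 0 \<le> w z"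
    and cd: "\<And>z. z \<in> space N \<Longrightarrow> 0 \<le> d z \<and> d z \<le> c z \<and> c z \<le> 1"
    and hyp: "\<And>x. 0 \<le> x \<Longrightarrow> x \<le> 1 \<Longrightarrow> (\<integral>z. w z * measure U01 {u. c z - u * d z \<le> x} \<partial>N) = x"
    and iM: "i < M"
  shows "(\<integral>z. w z * (\<integral>u. bc (clamp01 (c z - u * d z)) M (int i) \<partial>U01) \<partial>N) = real (i + 1) / real (M + 1)"
proof -
  have "(\<integral>z. w z * (\<integral>u. bc (clamp01 (c z - u * d z)) M (int i) \<partial>U01) \<partial>N) = (\<integral>u. bc (clamp01 u) M (int i) \<partial>U01)"
    by (rule core[OF wm cm dm wnn cd bcc_meas bcc_bound hyp])
  also have "\<dots> = integral {0..1} (\<lambda>u. bc (clamp01 u) M (int i))"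
    by (rule U01_integral[OF bcc_cont])
  also have "\<dots> = integral {0..1} (\<lambda>u. bc u M (int i))"
    by (rule integral_cong) (simp add: clamp01_id)
  also have "\<dots> = real (i + 1) / real (M + 1)"
    using iM by (simp add: bc_integral)
  finally show ?thesis .
qed

theorem theorem3:
  fixes MT :: "'a measure" and MY :: "'b measure"
    and prior :: "'a \<Rightarrow> real" and obs :: "'b \<Rightarrow> 'a \<Rightarrow> real"
    and phi :: "'a \<Rightarrow> 'b \<Rightarrow> real" and f :: "'a \<Rightarrow> 'b \<Rightarrow> real"
    and M :: nat
  assumes "sigma_finite_measure MT" and "sigma_finite_measure MY"
    and "is_model MT MY prior obs"
    and "posterior_family MT MY phi"
    and "test_quantity MT MY f"
  shows "(\<forall>y\<in>space MY. (\<forall>x\<in>{0..1}. q_pit MT prior obs phi f x y = x) \<longrightarrow>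
            (\<forall>i<M. Q_rank MT prior obs phi f M i y = real (i + 1) / real (M + 1)))
       \<and> (passes_cont_SBC MT MY prior obs phi f \<longrightarrow> passes_M_SBC MT MY prior obs phi f M)"
proof -
  interpret MT: sigma_finite_measure MT by (rule assms(1))
  interpret MY: sigma_finite_measure MY by (rule assms(2))
  interpret YT: pair_sigma_finite MY MT by (intro pair_sigma_finite.intro assms(1,2))
  interpret U: prob_space U01 by (rule U01_prob)
  have priorm[measurable]: "prior \<in> borel_measurable MT"
    and priornn: "\<And>\<theta>. \<theta> \<in> space MT \<Longrightarrow> 0 \<le> prior \<theta>"
    and prior1: "(\<integral>\<theta>. prior \<theta> \<partial>MT) = 1"
    and obsm[measurable]: "(\<lambda>(y, \<theta>). obs y \<theta>) \<in> borel_measurable (MY \<Otimes>\<^sub>M MT)"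
    and obsnn: "\<And>y \<theta>. y \<in> space MY \<Longrightarrow> \<theta> \<in> space MT \<Longrightarrow> 0 \<le> obs y \<theta>"
    and obs1: "\<And>\<theta>. \<theta> \<in> space MT \<Longrightarrow> (\<integral>y. obs y \<theta> \<partial>MY) = 1"
    using assms(3) unfolding is_model_def by auto
  have phim[measurable]: "(\<lambda>(\<theta>, y). phi \<theta> y) \<in> borel_measurable (MT \<Otimes>\<^sub>M MY)"
    and phinn: "\<And>\<theta> y. \<theta> \<in> space MT \<Longrightarrow> y \<in> space MY \<Longrightarrow> 0 \<le> phi \<theta> y"
    and phi1: "\<And>y. y \<in> space MY \<Longrightarrow> (\<integral>\<theta>. phi \<theta> y \<partial>MT) = 1"
    using assms(4) unfolding posterior_family_def by auto
  have fm[measurable]: "(\<lambda>(\<theta>, y). f \<theta> y) \<in> borel_measurable (MT \<Otimes>\<^sub>M MY)"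
    using assms(5) unfolding test_quantity_def by auto
  have phi_y: "(\<lambda>\<theta>. phi \<theta> y) \<in> borel_measurable MT" if "y \<in> space MY" for y
    using measurable_compose[OF measurable_Pair2'[OF that] phim] by simp
  have f_y: "(\<lambda>\<theta>. f \<theta> y) \<in> borel_measurable MT" if "y \<in> space MY" for y
    using measurable_compose[OF measurable_Pair2'[OF that] fm] by simp
  have obs_y: "(\<lambda>\<theta>. obs y \<theta>) \<in> borel_measurable MT" if "y \<in> space MY" for y
    using measurable_compose[OF measurable_Pair1'[OF that] obsm] by simp
  have obs_t: "(\<lambda>y. obs y \<theta>) \<in> borel_measurable MY" if "\<theta> \<in> space MT" for \<theta>
    using measurable_compose[OF measurable_Pair2'[OF that] obsm] by simp
  have margnn: "0 \<le> marg MT prior obs y" if "y \<in> space MY" for y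
    unfolding marg_def by (rule Bochner_Integration.integral_nonneg) (simp add: obsnn priornn that)
  have postnn: "0 \<le> post MT prior obs \<theta> y" if "y \<in> space MY" "\<theta> \<in> space MT" for y \<theta>
    unfolding post_def using margnn[OF that(1)] obsnn[OF that] priornn[OF that(2)] by simp
  define CC where "CC p = C_cdf MT phi f (f (snd p) (fst p)) (fst p)" for p :: "'b \<times> 'a"
  define DD where "DD p = D_atom MT phi f (f (snd p) (fst p)) (fst p)" for p :: "'b \<times> 'a"
  have CCm[measurable]: "CC \<in> borel_measurable (MY \<Otimes>\<^sub>M MT)"
  proof -
    have e: "CC = (\<lambda>p. \<integral>\<theta>'. (if f \<theta>' (fst p) \<le> f (snd p) (fst p) then phi \<theta>' (fst p) else 0) \<partial>MT)"
      by (auto simp: CC_def C_cdf_def indicator_def intro!: ext Bochner_Integration.integral_cong)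
    show ?thesis unfolding e by measurable
  qed
  have DDm[measurable]: "DD \<in> borel_measurable (MY \<Otimes>\<^sub>M MT)"
  proof -
    have e: "DD = (\<lambda>p. \<integral>\<theta>'. (if f \<theta>' (fst p) = f (snd p) (fst p) then phi \<theta>' (fst p) else 0) \<partial>MT)"
      by (auto simp: DD_def D_atom_def indicator_def intro!: ext Bochner_Integration.integral_cong)
    show ?thesis unfolding e by measurable
  qed
  have CDb: "0 \<le> DD p \<and> DD p \<le> CC p \<and> CC p \<le> 1" if "p \<in> space (MY \<Otimes>\<^sub>M MT)" for p
  proof -
    have y: "fst p \<in> space MY" using that by (auto simp: space_pair_measure)
    show ?thesis unfolding CC_def DD_def
      using CD_bounds[where MT=MT and phi=phi and f=f and y="fst p" and s="f (snd p) (fst p)",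
          OF phi_y[OF y] phinn phi1[OF y] f_y[OF y]] y by auto
  qed
  have Rh: "R_rank MT phi f M i \<theta> y = (\<integral>u. bc (clamp01 (CC (y, \<theta>) - u * DD (y, \<theta>))) M (int i) \<partial>U01)"
    if y: "y \<in> space MY" for y \<theta> i
    unfolding CC_def DD_def fst_conv snd_conv
    by (rule R_formula_h[where MT=MT and phi=phi and f=f and y=y, OF phi_y[OF y] phinn[OF _ y] phi1[OF y] f_y[OF y]])
  show ?thesis
  proof (intro conjI ballI impI allI)
    fix y i assume y: "y \<in> space MY" and hq: "\<forall>x\<in>{0..1}. q_pit MT prior obs phi f x y = x" and iM: "i < M"
    have [measurable]: "(\<lambda>\<theta>. obs y \<theta>) \<in> borel_measurable MT" by (rule obs_y[OF y])
    have cm: "(\<lambda>\<theta>. CC (y, \<theta>)) \<in> borel_measurable MT"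
      using measurable_compose[OF measurable_Pair1'[OF y] CCm] by simp
    have dm: "(\<lambda>\<theta>. DD (y, \<theta>)) \<in> borel_measurable MT"
      using measurable_compose[OF measurable_Pair1'[OF y] DDm] by simp
    have wm: "(\<lambda>\<theta>. post MT prior obs \<theta> y) \<in> borel_measurable MT"
      unfolding post_def by measurable
    have "Q_rank MT prior obs phi f M i y = (\<integral>\<theta>. post MT prior obs \<theta> y * (\<integral>u. bc (clamp01 (CC (y, \<theta>) - u * DD (y, \<theta>))) M (int i) \<partial>U01) \<partial>MT)"
      unfolding Q_rank_def using Rh[OF y] by simp
    also have "\<dots> = real (i + 1) / real (M + 1)"
    proof (rule final_core[OF wm cm dm _ _ _ iM])
      show "0 \<le> post MT prior obs \<theta> y" if "\<theta> \<in> space MT" for \<theta> using postnn[OF y that] .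
      show "0 \<le> DD (y, \<theta>) \<and> DD (y, \<theta>) \<le> CC (y, \<theta>) \<and> CC (y, \<theta>) \<le> 1" if "\<theta> \<in> space MT" for \<theta>
        using CDb[of "(y, \<theta>)"] y that by (simp add: space_pair_measure)
      show "(\<integral>\<theta>. post MT prior obs \<theta> y * measure U01 {u. CC (y, \<theta>) - u * DD (y, \<theta>) \<le> x} \<partial>MT) = x"
        if "0 \<le> x" "x \<le> 1" for x
        using hq that unfolding q_pit_def r_pit_def CC_def DD_def by simp
    qed
    finally show "Q_rank MT prior obs phi f M i y = real (i + 1) / real (M + 1)" .
  next
    assume cont: "passes_cont_SBC MT MY prior obs phi f"
    define OP where "OP p = obs (fst p) (snd p) * prior (snd p)" for p :: "'b \<times> 'a"
    define W where "W p = marg MT prior obs (fst p) * post MT prior obs (snd p) (fst p)" for p :: "'b \<times> 'a"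
    have OPm[measurable]: "OP \<in> borel_measurable (MY \<Otimes>\<^sub>M MT)" unfolding OP_def by measurable
    have Wm[measurable]: "W \<in> borel_measurable (MY \<Otimes>\<^sub>M MT)" unfolding W_def post_def marg_def by measurable
    have Wb: "0 \<le> W p \<and> W p \<le> OP p" if "p \<in> space (MY \<Otimes>\<^sub>M MT)" for p
    proof -
      have p: "fst p \<in> space MY" "snd p \<in> space MT" using that by (auto simp: space_pair_measure)
      have "0 \<le> OP p" unfolding OP_def using obsnn[OF p] priornn[OF p(2)] by simp
      moreover have "W p = (if marg MT prior obs (fst p) = 0 then 0 else OP p)"
        unfolding W_def post_def OP_def by auto
      moreover have "0 \<le> W p" unfolding W_def using margnn[OF p(1)] postnn[OF p] by simp
      ultimately show ?thesis by auto
    qed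
    have OPint: "integrable (MY \<Otimes>\<^sub>M MT) OP"
    proof (rule integrableI_nonneg)
      show "AE p in MY \<Otimes>\<^sub>M MT. 0 \<le> OP p"
        by (rule AE_I2) (use Wb in force)
      have "(\<integral>\<^sup>+p. ennreal (OP p) \<partial>(MY \<Otimes>\<^sub>M MT)) = (\<integral>\<^sup>+\<theta>. (\<integral>\<^sup>+y. ennreal (OP (y, \<theta>)) \<partial>MY) \<partial>MT)"
        by (rule YT.nn_integral_snd[symmetric]) measurable
      also have "\<dots> = (\<integral>\<^sup>+\<theta>. ennreal (prior \<theta>) \<partial>MT)"
      proof (rule nn_integral_cong)
        fix \<theta> assume t: "\<theta> \<in> space MT"
        have oi: "integrable MY (\<lambda>y. obs y \<theta>)"
          using obs1[OF t] not_integrable_integral_eq by force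
        have "(\<integral>\<^sup>+y. ennreal (OP (y, \<theta>)) \<partial>MY) = (\<integral>\<^sup>+y. ennreal (prior \<theta>) * ennreal (obs y \<theta>) \<partial>MY)"
          unfolding OP_def
          by (rule nn_integral_cong) (simp add: ennreal_mult' priornn[OF t] mult.commute)
        also have "\<dots> = ennreal (prior \<theta>) * (\<integral>\<^sup>+y. ennreal (obs y \<theta>) \<partial>MY)"
          by (rule nn_integral_cmult) (rule measurable_compose[OF obs_t[OF t] measurable_ennreal])
        also have "(\<integral>\<^sup>+y. ennreal (obs y \<theta>) \<partial>MY) = ennreal (\<integral>y. obs y \<theta> \<partial>MY)"
          by (rule nn_integral_eq_integral[OF oi]) (simp add: obsnn t)
        finally show "(\<integral>\<^sup>+y. ennreal (OP (y, \<theta>)) \<partial>MY) = ennreal (prior \<theta>)" by (simp add: obs1[OF t])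
      qed
      also have "\<dots> = ennreal (\<integral>\<theta>. prior \<theta> \<partial>MT)"
      proof (rule nn_integral_eq_integral)
        show "integrable MT prior" using prior1 not_integrable_integral_eq by force
      qed (simp add: priornn)
      finally show "(\<integral>\<^sup>+p. ennreal (OP p) \<partial>(MY \<Otimes>\<^sub>M MT)) < \<infinity>" by (simp add: prior1)
    qed simp
    have intW: "integrable (MY \<Otimes>\<^sub>M MT) (\<lambda>p. W p * g p)"
      if gm: "g \<in> borel_measurable (MY \<Otimes>\<^sub>M MT)" and gb: "\<And>p. p \<in> space (MY \<Otimes>\<^sub>M MT) \<Longrightarrow> \<bar>g p\<bar> \<le> 1" for g
    proof (rule Bochner_Integration.integrable_bound[OF OPint])
      show "(\<lambda>p. W p * g p) \<in> borel_measurable (MY \<Otimes>\<^sub>M MT)" using gm by measurable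
      show "AE p in MY \<Otimes>\<^sub>M MT. norm (W p * g p) \<le> norm (OP p)"
      proof (rule AE_I2)
        fix p assume p: "p \<in> space (MY \<Otimes>\<^sub>M MT)"
        have "\<bar>W p * g p\<bar> \<le> W p * 1" using Wb[OF p] gb[OF p] by (simp add: abs_mult) (metis mult_left_mono mult.right_neutral)
        also have "\<dots> \<le> \<bar>OP p\<bar>" using Wb[OF p] by simp
        finally show "norm (W p * g p) \<le> norm (OP p)" by simp
      qed
    qed
    show "passes_M_SBC MT MY prior obs phi f M"
      unfolding passes_M_SBC_def
    proof (intro allI impI)
      fix i assume iM: "i < M"
      define Rh' where "Rh' p = (\<integral>u. bc (clamp01 (CC p - u * DD p)) M (int i) \<partial>U01)" for p
      have Rhm: "Rh' \<in> borel_measurable (MY \<Otimes>\<^sub>M MT)"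
      proof -
        have "(\<lambda>(p, u). bc (clamp01 (CC p - u * DD p)) M (int i)) \<in> borel_measurable ((MY \<Otimes>\<^sub>M MT) \<Otimes>\<^sub>M U01)"
        proof -
          have "(\<lambda>(p, u). CC p - u * DD p) \<in> borel_measurable ((MY \<Otimes>\<^sub>M MT) \<Otimes>\<^sub>M U01)" by measurable
          then show ?thesis unfolding split_beta' by (rule measurable_compose[OF _ bcc_meas])
        qed
        then show ?thesis unfolding Rh'_def by (rule U.borel_measurable_lebesgue_integral)
      qed
      have "(\<integral>y. Q_rank MT prior obs phi f M i y * marg MT prior obs y \<partial>MY)
          = (\<integral>y. (\<integral>\<theta>. W (y, \<theta>) * Rh' (y, \<theta>) \<partial>MT) \<partial>MY)"
      proof (rule Bochner_Integration.integral_cong[OF refl])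
        fix y assume y: "y \<in> space MY"
        show "Q_rank MT prior obs phi f M i y * marg MT prior obs y = (\<integral>\<theta>. W (y, \<theta>) * Rh' (y, \<theta>) \<partial>MT)"
          unfolding Q_rank_def W_def Rh'_def fst_conv snd_conv Rh[OF y] integral_mult_left_zero[symmetric]
          by (rule Bochner_Integration.integral_cong) (simp_all add: mult_ac)
      qed
      also have "\<dots> = (\<integral>p. W p * Rh' p \<partial>(MY \<Otimes>\<^sub>M MT))"
        using YT.integral_fst'[OF intW[OF Rhm]] by (simp add: Rh'_def Rh_bound)
      also have "\<dots> = real (i + 1) / real (M + 1)"
        unfolding Rh'_def
      proof (rule final_core[OF Wm CCm DDm _ CDb _ iM])
        show "0 \<le> W p" if "p \<in> space (MY \<Otimes>\<^sub>M MT)" for p using Wb[OF that] by simp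
        fix x :: real assume x: "0 \<le> x" "x \<le> 1"
        define r where "r p = measure U01 {u. CC p - u * DD p \<le> x}" for p
        have rm: "r \<in> borel_measurable (MY \<Otimes>\<^sub>M MT)"
        proof -
          have e: "r = (\<lambda>p. \<integral>u. (if CC p - u * DD p \<le> x then 1 else 0) \<partial>U01)"
          proof
            fix p
            have "r p = (\<integral>u. indicator {u. CC p - u * DD p \<le> x} u \<partial>U01)" unfolding r_def by simp
            also have "\<dots> = (\<integral>u. (if CC p - u * DD p \<le> x then 1 else 0) \<partial>U01)"
              by (rule Bochner_Integration.integral_cong) (auto simp: indicator_def)
            finally show "r p = (\<integral>u. (if CC p - u * DD p \<le> x then 1 else 0) \<partial>U01)" .
          qed
          show ?thesis unfolding e by measurable
        qed
        have rb: "\<bar>r p\<bar> \<le> 1" for p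
        proof -
          have "0 \<le> r p" "r p \<le> 1" unfolding r_def by (rule measure_nonneg, rule U.prob_le_1)
          then show ?thesis by simp
        qed
        have "x = (\<integral>y. q_pit MT prior obs phi f x y * marg MT prior obs y \<partial>MY)"
          using cont x unfolding passes_cont_SBC_def by simp
        also have "\<dots> = (\<integral>y. (\<integral>\<theta>. W (y, \<theta>) * r (y, \<theta>) \<partial>MT) \<partial>MY)"
        proof (rule Bochner_Integration.integral_cong[OF refl])
          fix y assume y: "y \<in> space MY"
          show "q_pit MT prior obs phi f x y * marg MT prior obs y = (\<integral>\<theta>. W (y, \<theta>) * r (y, \<theta>) \<partial>MT)"
            unfolding q_pit_def W_def r_def fst_conv snd_conv integral_mult_left_zero[symmetric]
            by (rule Bochner_Integration.integral_cong) (simp_all add: mult_ac r_pit_def CC_def DD_def)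
        qed
        also have "\<dots> = (\<integral>p. W p * r p \<partial>(MY \<Otimes>\<^sub>M MT))"
          using YT.integral_fst'[OF intW[OF rm rb]] by simp
        finally show "(\<integral>p. W p * measure U01 {u. CC p - u * DD p \<le> x} \<partial>(MY \<Otimes>\<^sub>M MT)) = x"
          unfolding r_def by simp
      qed
      finally show "(\<integral>y. Q_rank MT prior obs phi f M i y * marg MT prior obs y \<partial>MY) = real (i + 1) / real (M + 1)" .
    qed
  qed
qed

end
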